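(* Let $q>0$ and let $D^*>0$ be the unique positive root of $q-D(F_q+G_q)'(D)/(F_q+G_q)(D)=0$. Then $D^*\ge\sqrt{\max((q-1)/2,0)}$.
   Context: $F_q(y):=\int_0^\infty u^{q-1}e^{yu-u^2/2}\,\mathrm{d}u$ and $G_q(y):=F_q(-y)$ for $y\in\mathbb{R}$. It is known that such a unique positive root $D^*$ exists. Moreover, $\frac{\partial}{\partial D}\frac{D^q}{(F_q+G_q)(D)}>0$ if and only if $D<D^*$, for $D>0$. *)

theory Defs
  imports "HOL-Analysis.Analysis"
begin

definition F :: "real \<Rightarrow> real \<Rightarrow> real" where
  "F q y = (LBINT u:{0<..}. u powr (q - 1) * exp (y * u - u\<^sup>2 / 2))"

definition G :: "real \<Rightarrow> real \<Rightarrow> real" where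
  "G q y = F q (- y)"

end

theory Submission imports Defs "HOL-Real_Asymp.Real_Asymp" begin

lemma gam_int:
  assumes "r > -1"
  shows "set_integrable lborel {0<..} (\<lambda>u::real. u powr r * exp (-u))"
proof -
  have "((\<lambda>t. t powr (r+1 - 1) / exp t) has_integral Gamma (r+1)) {0..}"
    using Gamma_integral_real[of "r+1"] assms by simp
  hence "(\<lambda>t. t powr r * exp (-t)) integrable_on {0..}"
    by (auto simp: exp_minus field_simps)
  hence "(\<lambda>t. t powr r * exp (-t)) absolutely_integrable_on {0..}"
    by (rule nonnegative_absolutely_integrable_1) auto
  hence "set_integrable lborel {0..} (\<lambda>t::real. t powr r * exp (-t))"
    unfolding set_integrable_def
    by (subst (asm) integrable_completion) (auto simp: set_integrable_def)
  thus ?thesis by (rule set_integrable_subset) auto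
qed

lemma exp_quad_bound: "c * u - u\<^sup>2 / 2 \<le> (c+1)\<^sup>2/2 - (u::real)"
proof -
  have "0 \<le> (u - (c+1))\<^sup>2" by simp
  thus ?thesis by (simp add: power2_eq_square algebra_simps)
qed

lemma int_gen:
  assumes "r > -1"
  shows "set_integrable lborel {0<..} (\<lambda>u::real. u powr r * exp (c*u - u\<^sup>2/2))"
proof -
  have "set_integrable lborel {0<..} (\<lambda>u::real. exp ((c+1)\<^sup>2/2) * (u powr r * exp (-u)))"
    using gam_int[OF assms] by simp
  thus ?thesis
  proof (rule set_integrable_bound)
    show "set_borel_measurable lborel {0<..} (\<lambda>u::real. u powr r * exp (c*u - u\<^sup>2/2))"
      unfolding set_borel_measurable_def by measurable
    show "AE x in lborel. x \<in> {0<..} \<longrightarrow> norm (x powr r * exp (c*x - x\<^sup>2/2)) \<le> norm (exp ((c+1)\<^sup>2/2) * (x powr r * exp (-x)))"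
    proof (rule AE_I2, rule impI)
      fix x :: real assume "x \<in> {0<..}"
      have "exp (c*x - x\<^sup>2/2) \<le> exp ((c+1)\<^sup>2/2 + (-x))"
        using exp_quad_bound[of c x] by simp
      also have "\<dots> = exp ((c+1)\<^sup>2/2) * exp (-x)" by (rule exp_add)
      finally have "x powr r * exp (c*x - x\<^sup>2/2) \<le> x powr r * (exp ((c+1)\<^sup>2/2) * exp (-x))"
        by (rule mult_left_mono) simp
      thus "norm (x powr r * exp (c*x - x\<^sup>2/2)) \<le> norm (exp ((c+1)\<^sup>2/2) * (x powr r * exp (-x)))"
        by (simp add: mult_ac)
    qed
  qed
qed

definition I :: "real \<Rightarrow> real \<Rightarrow> real" where
  "I r c = (LBINT u:{0<..}. u powr r * exp (c*u - u\<^sup>2/2))"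

lemma I_pos:
  assumes "r > -1"
  shows "I r c > 0"
proof -
  let ?f = "\<lambda>u::real. indicator {0<..} u * (u powr r * exp (c*u - u\<^sup>2/2))"
  have int: "integrable lborel ?f" using int_gen[OF assms, of c] by (simp add: set_integrable_def)
  have nn: "AE x in lborel. 0 \<le> ?f x" by (rule AE_I2) (simp add: indicator_def)
  have ge: "I r c \<ge> 0" unfolding I_def set_lebesgue_integral_def
    by (rule integral_nonneg_AE) (use nn in simp)
  moreover have "I r c \<noteq> 0"
  proof
    assume "I r c = 0"
    hence "integral\<^sup>L lborel ?f = 0" unfolding I_def set_lebesgue_integral_def by simp
    hence "AE x in lborel. ?f x = 0" using integral_nonneg_eq_0_iff_AE[OF int nn] by simp
    hence "AE x in lborel. x \<notin> {1..2::real}"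
      by (rule AE_mp) (rule AE_I2, auto simp: indicator_def)
    hence "{1..2::real} \<in> null_sets lborel" by (subst AE_iff_null_sets) auto
    hence "emeasure lborel {1..2::real} = 0" by auto
    thus False by simp
  qed
  ultimately show ?thesis by simp
qed


lemma lim_top: "((\<lambda>u::real. u powr q * exp (c*u - u\<^sup>2/2)) \<longlongrightarrow> 0) at_top"
  by real_asymp

lemma lim_zero: assumes "q > 0" shows "((\<lambda>u::real. u powr q * exp (c*u - u\<^sup>2/2)) \<longlongrightarrow> 0) (at_right 0)"
  using assms by real_asymp

lemma ibp:
  assumes q: "q > 0"
  shows "q * I (q-1) c + c * I q c - I (q+1) c = 0"
proof -
  let ?e = "\<lambda>u::real. exp (c*u - u\<^sup>2/2)"
  let ?F = "\<lambda>u::real. u powr q * ?e u"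
  let ?f = "\<lambda>u::real. q * (u powr (q-1) * ?e u) + c * (u powr q * ?e u) - u powr (q+1) * ?e u"
  have i1: "set_integrable lborel {0<..} (\<lambda>u. u powr (q-1) * ?e u)" using int_gen q by simp
  have i2: "set_integrable lborel {0<..} (\<lambda>u. u powr q * ?e u)" using int_gen q by simp
  have i3: "set_integrable lborel {0<..} (\<lambda>u. u powr (q+1) * ?e u)" using int_gen q by simp
  have fi: "set_integrable lborel {0<..} ?f"
    using i1 i2 i3 by (intro set_integral_diff set_integral_add set_integrable_mult_right) auto
  have ein: "einterval 0 \<infinity> = {0<..}" by (auto simp: einterval_def)
  have "(LBINT u=0..\<infinity>. ?f u) = 0 - 0"
  proof (rule interval_integral_FTC_integrable)
    show "(0::ereal) < \<infinity>" by simp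
    fix x :: real assume "0 < ereal x" "ereal x < \<infinity>"
    hence x: "x > 0" by simp
    have "(?F has_real_derivative (q * x powr (q-1)) * ?e x + x powr q * (?e x * (c - x))) (at x)"
      using x by (auto intro!: derivative_eq_intros simp: power2_eq_square algebra_simps)
    moreover have "(q * x powr (q-1)) * ?e x + x powr q * (?e x * (c - x)) = ?f x"
      using x by (simp add: powr_add algebra_simps)
    ultimately show "(?F has_vector_derivative ?f x) (at x)"
      by (simp add: has_real_derivative_iff_has_vector_derivative)
    show "isCont ?f x" using x by (auto intro!: continuous_intros)
  next
    show "set_integrable lborel (einterval 0 \<infinity>) ?f" using fi ein by simp
    show "((?F \<circ> real_of_ereal) \<longlongrightarrow> 0) (at_right 0)"
      using lim_zero[OF q, of c] by (simp add: zero_ereal_def ereal_tendsto_simps1)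
    show "((?F \<circ> real_of_ereal) \<longlongrightarrow> 0) (at_left \<infinity>)"
      using lim_top[of q c] by (simp add: ereal_tendsto_simps1)
  qed
  hence "(LBINT u:{0<..}. ?f u) = 0" using ein by (simp add: interval_lebesgue_integral_def)
  moreover have "(LBINT u:{0<..}. ?f u) = q * I (q-1) c + c * I q c - I (q+1) c"
    unfolding I_def using i1 i2 i3
    by (subst set_integral_diff(2)) (auto intro: set_integral_add)
  ultimately show ?thesis by simp
qed

lemma exp_taylor: "\<bar>exp (h::real) - 1 - h\<bar> \<le> exp \<bar>h\<bar> * h\<^sup>2 / 2"
proof -
  obtain t where t: "\<bar>t\<bar> \<le> \<bar>h\<bar>" "exp h = (\<Sum>m<2. h ^ m / fact m) + exp t / fact 2 * h ^ 2"
    using Maclaurin_exp_le[of h 2] by blast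
  have "(\<Sum>m<2. h ^ m / fact m) = 1 + h" by (simp add: numeral_2_eq_2)
  hence eq: "exp h - 1 - h = exp t * h\<^sup>2 / 2" using t(2) by simp
  have "\<bar>exp h - 1 - h\<bar> = exp t * h\<^sup>2 / 2" unfolding eq by simp
  also have "\<dots> \<le> exp \<bar>h\<bar> * h\<^sup>2 / 2"
    by (intro divide_right_mono mult_right_mono) (use t(1) in auto)
  finally show ?thesis .
qed

lemma pt_bound:
  fixes u y D r :: real
  assumes u: "u > 0" and yD: "\<bar>y - D\<bar> \<le> 1"
  shows "\<bar>u powr r * exp (y*u - u\<^sup>2/2) - u powr r * exp (D*u - u\<^sup>2/2) - (y-D) * (u powr (r+1) * exp (D*u - u\<^sup>2/2))\<bar>
         \<le> (y-D)\<^sup>2/2 * (u powr (r+2) * exp ((\<bar>D\<bar>+1)*u - u\<^sup>2/2))"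
proof -
  define h where "h = (y-D)*u"
  define E where "E = exp (D*u - u\<^sup>2/2)"
  have E0: "E > 0" by (simp add: E_def)
  have ey: "exp (y*u - u\<^sup>2/2) = E * exp h"
    unfolding E_def h_def by (simp add: exp_add[symmetric] algebra_simps)
  have p1: "u powr (r+1) = u powr r * u" using u by (simp add: powr_add)
  have p2: "u powr (r+2) = u powr r * u\<^sup>2" using u by (simp add: powr_add power2_eq_square)
  have lhs: "u powr r * exp (y*u - u\<^sup>2/2) - u powr r * exp (D*u - u\<^sup>2/2) - (y-D) * (u powr (r+1) * exp (D*u - u\<^sup>2/2))
      = u powr r * E * (exp h - 1 - h)"
    unfolding ey p1 by (simp add: E_def[symmetric] h_def algebra_simps)
  have "\<bar>u powr r * E * (exp h - 1 - h)\<bar> = u powr r * E * \<bar>exp h - 1 - h\<bar>"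
    using E0 by (simp add: abs_mult)
  also have "\<dots> \<le> u powr r * E * (exp \<bar>h\<bar> * h\<^sup>2 / 2)"
    by (rule mult_left_mono[OF exp_taylor]) (use E0 in simp)
  also have "\<dots> \<le> u powr r * E * (exp u * h\<^sup>2 / 2)"
  proof -
    have "\<bar>h\<bar> \<le> u" unfolding h_def using yD u by (simp add: abs_mult mult_left_le_one_le)
    hence "exp \<bar>h\<bar> \<le> exp u" by simp
    thus ?thesis by (intro mult_left_mono divide_right_mono mult_right_mono) (use E0 in auto)
  qed
  also have "\<dots> = (y-D)\<^sup>2/2 * (u powr r * u\<^sup>2 * (E * exp u))"
    by (simp add: h_def power_mult_distrib)
  also have "\<dots> \<le> (y-D)\<^sup>2/2 * (u powr r * u\<^sup>2 * exp ((\<bar>D\<bar>+1)*u - u\<^sup>2/2))"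
  proof -
    have "E * exp u = exp ((D+1)*u - u\<^sup>2/2)" unfolding E_def by (simp add: exp_add[symmetric] algebra_simps)
    also have "\<dots> \<le> exp ((\<bar>D\<bar>+1)*u - u\<^sup>2/2)" using u by (simp add: mult_right_mono)
    finally show ?thesis by (intro mult_left_mono) auto
  qed
  finally show ?thesis unfolding lhs p2 .
qed

lemma I_quad_bound:
  assumes r: "r > -1" and yD: "\<bar>y - D\<bar> \<le> 1"
  shows "\<bar>I r y - I r D - (y-D) * I (r+1) D\<bar> \<le> (y-D)\<^sup>2 * (I (r+2) (\<bar>D\<bar>+1) / 2)"
proof -
  let ?a = "\<lambda>u::real. u powr r * exp (y*u - u\<^sup>2/2)"
  let ?b = "\<lambda>u::real. u powr r * exp (D*u - u\<^sup>2/2)"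
  let ?c = "\<lambda>u::real. (y-D) * (u powr (r+1) * exp (D*u - u\<^sup>2/2))"
  let ?B = "\<lambda>u::real. (y-D)\<^sup>2/2 * (u powr (r+2) * exp ((\<bar>D\<bar>+1)*u - u\<^sup>2/2))"
  have ia: "set_integrable lborel {0<..} ?a" using int_gen r by simp
  have ib: "set_integrable lborel {0<..} ?b" using int_gen r by simp
  have ic: "set_integrable lborel {0<..} ?c" using int_gen[of "r+1" D] r by simp
  have iB: "set_integrable lborel {0<..} ?B" using int_gen[of "r+2" "\<bar>D\<bar>+1"] r by simp
  have iab: "set_integrable lborel {0<..} (\<lambda>u. ?a u - ?b u)" using ia ib by auto
  have ig: "set_integrable lborel {0<..} (\<lambda>u. ?a u - ?b u - ?c u)" using iab ic by auto
  have eqI: "I r y - I r D - (y-D) * I (r+1) D = (LBINT u:{0<..}. ?a u - ?b u - ?c u)"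
    unfolding I_def using ia ib ic iab
    by (simp add: set_integral_diff(2) set_integral_mult_right)
  have eqB: "(LBINT u:{0<..}. ?B u) = (y-D)\<^sup>2 * (I (r+2) (\<bar>D\<bar>+1) / 2)"
    unfolding I_def by (simp add: set_integral_mult_right)
  have pb: "?a u - ?b u - ?c u \<le> ?B u \<and> - ?B u \<le> ?a u - ?b u - ?c u" if "u \<in> {0<..}" for u
  proof -
    have "\<bar>?a u - ?b u - ?c u\<bar> \<le> ?B u" using pt_bound[OF _ yD, of u r] that by simp
    thus ?thesis by linarith
  qed
  have "(LBINT u:{0<..}. ?a u - ?b u - ?c u) \<le> (LBINT u:{0<..}. ?B u)"
    by (rule set_integral_mono[OF ig iB]) (use pb in blast)
  moreover have "(LBINT u:{0<..}. - ?B u) \<le> (LBINT u:{0<..}. ?a u - ?b u - ?c u)"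
  proof (rule set_integral_mono[OF _ ig])
    show "set_integrable lborel {0<..} (\<lambda>u. - ?B u)"
      using set_integrable_mult_right[OF iB, of "-1"] by simp
  qed (use pb in blast)
  moreover have "(LBINT u:{0<..}. - ?B u) = - (LBINT u:{0<..}. ?B u)"
    by (rule set_integral_uminus[OF iB])
  ultimately show ?thesis unfolding eqI eqB[symmetric] by (simp add: abs_le_iff)
qed

lemma I_deriv:
  assumes r: "r > -1"
  shows "((\<lambda>y. I r y) has_real_derivative I (r+1) D) (at D)"
proof -
  define C where "C = I (r+2) (\<bar>D\<bar>+1) / 2"
  have ev: "eventually (\<lambda>y. norm ((I r y - I r D) / (y - D) - I (r+1) D) \<le> C * \<bar>y - D\<bar>) (at D)"
  proof -
    have "eventually (\<lambda>y. y \<in> ball D 1) (at D)"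
      by (rule eventually_at_in_open') auto
    moreover have "eventually (\<lambda>y. y \<noteq> D) (at D)" by (rule eventually_neq_at_within)
    ultimately show ?thesis
    proof eventually_elim
      case (elim y)
      hence yD: "\<bar>y - D\<bar> \<le> 1" "y - D \<noteq> 0" by (auto simp: dist_real_def)
      have "(I r y - I r D) / (y - D) - I (r+1) D = (I r y - I r D - (y-D) * I (r+1) D) / (y - D)"
        using yD(2) by (simp add: field_simps)
      hence "norm ((I r y - I r D) / (y - D) - I (r+1) D) = \<bar>I r y - I r D - (y-D) * I (r+1) D\<bar> / \<bar>y - D\<bar>"
        by simp
      also have "\<dots> \<le> (y-D)\<^sup>2 * C / \<bar>y - D\<bar>"
        using I_quad_bound[OF r yD(1)] by (intro divide_right_mono) (auto simp: C_def)
      also have "\<dots> = C * \<bar>y - D\<bar>" using yD(2) by (simp add: power2_eq_square field_simps)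
      finally show ?case .
    qed
  qed
  have "((\<lambda>y. C * \<bar>y - D\<bar>) \<longlongrightarrow> C * \<bar>D - D\<bar>) (at D)"
    by (intro tendsto_intros)
  hence lim0: "((\<lambda>y. C * \<bar>y - D\<bar>) \<longlongrightarrow> 0) (at D)" by simp
  have "((\<lambda>y. (I r y - I r D) / (y - D) - I (r+1) D) \<longlongrightarrow> 0) (at D)"
    by (rule Lim_null_comparison[OF ev lim0])
  hence "((\<lambda>y. (I r y - I r D) / (y - D)) \<longlongrightarrow> I (r+1) D) (at D)"
    by (simp add: Lim_null[symmetric])
  thus ?thesis by (simp add: has_field_derivative_iff)
qed

lemma H_deriv:
  assumes r: "r > -1"
  shows "((\<lambda>y. I r y + I r (-y)) has_real_derivative (I (r+1) D - I (r+1) (-D))) (at D)"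
proof -
  have d1: "((\<lambda>y. I r y) has_real_derivative I (r+1) D) (at D)" by (rule I_deriv[OF r])
  have d2: "((\<lambda>y. I r y) has_real_derivative I (r+1) (-D)) (at (-D))" by (rule I_deriv[OF r])
  have d3: "((\<lambda>y. I r (-y)) has_real_derivative I (r+1) (-D) * (-1)) (at D)"
  proof -
    have m: "((\<lambda>y::real. -y) has_real_derivative -1) (at D)" by (auto intro!: derivative_eq_intros)
    have d2': "(I r has_real_derivative I (r+1) (-D)) (at ((\<lambda>y::real. -y) D))" using d2 by simp
    from DERIV_chain2[OF d2' m] show ?thesis by simp
  qed
  show ?thesis using DERIV_add[OF d1 d3] by simp
qed

lemma quad_nonneg:
  assumes r: "r > -1"
  shows "I (r+2) c - 2 * t * I (r+1) c + t\<^sup>2 * I r c \<ge> 0"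
proof -
  let ?e = "\<lambda>u::real. exp (c*u - u\<^sup>2/2)"
  have i0: "set_integrable lborel {0<..} (\<lambda>u. u powr r * ?e u)" using int_gen r by simp
  have i1: "set_integrable lborel {0<..} (\<lambda>u. u powr (r+1) * ?e u)" using int_gen r by simp
  have i2: "set_integrable lborel {0<..} (\<lambda>u. u powr (r+2) * ?e u)" using int_gen r by simp
  have i1': "set_integrable lborel {0<..} (\<lambda>u. 2 * t * (u powr (r+1) * ?e u))" using i1 by simp
  have i0': "set_integrable lborel {0<..} (\<lambda>u. t\<^sup>2 * (u powr r * ?e u))" using i0 by simp
  have i21: "set_integrable lborel {0<..} (\<lambda>u. u powr (r+2) * ?e u - 2 * t * (u powr (r+1) * ?e u))"
    using i2 i1' by auto
  have ig: "set_integrable lborel {0<..} (\<lambda>u. u powr (r+2) * ?e u - 2 * t * (u powr (r+1) * ?e u) + t\<^sup>2 * (u powr r * ?e u))"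
    using i21 i0' by auto
  have eq: "I (r+2) c - 2 * t * I (r+1) c + t\<^sup>2 * I r c
      = (LBINT u:{0<..}. u powr (r+2) * ?e u - 2 * t * (u powr (r+1) * ?e u) + t\<^sup>2 * (u powr r * ?e u))"
    unfolding I_def using i21 i0' i2 i1' by (simp add: set_integral_add(2) set_integral_diff(2))
  have "(LBINT (u::real):{0<..}. (0::real)) \<le> (LBINT u:{0<..}. u powr (r+2) * ?e u - 2 * t * (u powr (r+1) * ?e u) + t\<^sup>2 * (u powr r * ?e u))"
  proof (rule set_integral_mono[where f="\<lambda>u. 0::real", OF _ ig])
    show "set_integrable lborel {0<..} (\<lambda>u. 0::real)" by (simp add: set_integrable_def)
    fix u :: real assume "u \<in> {0<..}"
    hence u: "u > 0" by simp
    have "u powr (r+2) * ?e u - 2 * t * (u powr (r+1) * ?e u) + t\<^sup>2 * (u powr r * ?e u)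
        = (u powr r * ?e u) * (u - t)\<^sup>2"
      using u by (simp add: powr_add power2_eq_square algebra_simps)
    also have "\<dots> \<ge> 0" by simp
    finally show "0 \<le> u powr (r+2) * ?e u - 2 * t * (u powr (r+1) * ?e u) + t\<^sup>2 * (u powr r * ?e u)" .
  qed
  thus ?thesis unfolding eq by simp
qed

theorem lemma2p3:
  fixes q Dstar :: real
  assumes "q > 0"
    and "Dstar > 0"
    and "\<forall>D>0. (q - D * deriv (\<lambda>y. F q y + G q y) D / (F q D + G q D) = 0 \<longleftrightarrow> D = Dstar)"
  shows "Dstar \<ge> sqrt (max ((q - 1) / 2) 0)"
proof (cases "q \<le> 1")
  case True
  thus ?thesis using assms(2) by (simp add: max_def)
next
  case False
  hence q1: "q > 1" by simp
  define D where "D = Dstar"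
  have D0: "D > 0" using assms(2) D_def by simp
  have FI: "F q y = I (q-1) y" for y unfolding F_def I_def by simp
  have GI: "G q y = I (q-1) (-y)" for y unfolding G_def FI ..
  have r: "q - 1 > -1" using q1 by simp
  have hd: "((\<lambda>y. F q y + G q y) has_real_derivative (I q D - I q (-D))) (at D)"
    using H_deriv[OF r, of D] unfolding FI GI by simp
  hence dv: "deriv (\<lambda>y. F q y + G q y) D = I q D - I q (-D)" by (rule DERIV_imp_deriv)
  define A0 where "A0 = I (q-1) D"
  define B0 where "B0 = I (q-1) (-D)"
  define A1 where "A1 = I q D"
  define B1 where "B1 = I q (-D)"
  define A2 where "A2 = I (q+1) D"
  define B2 where "B2 = I (q+1) (-D)"
  have A0p: "A0 > 0" unfolding A0_def using I_pos[OF r] by simp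
  have B0p: "B0 > 0" unfolding B0_def using I_pos[OF r] by simp
  have B1p: "B1 > 0" unfolding B1_def using I_pos[of q] q1 by simp
  have S0p: "A0 + B0 > 0" using A0p B0p by simp
  have "q - D * deriv (\<lambda>y. F q y + G q y) D / (F q D + G q D) = 0"
    using assms(3) D0 unfolding D_def by blast
  hence "q - D * (A1 - B1) / (A0 + B0) = 0"
    unfolding dv unfolding FI GI A0_def B0_def A1_def B1_def .
  hence root: "q * (A0 + B0) = D * (A1 - B1)" using S0p by (simp add: field_simps)
  have ibA: "q * A0 + D * A1 - A2 = 0" unfolding A0_def A1_def A2_def using ibp[of q D] q1 by simp
  have ibB: "q * B0 + (-D) * B1 - B2 = 0" unfolding B0_def B1_def B2_def using ibp[of q "-D"] q1 by simp
  define t where "t = q / D"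
  have qA: "A2 - 2 * t * A1 + t\<^sup>2 * A0 \<ge> 0"
    using quad_nonneg[OF r, of D t] unfolding A0_def A1_def A2_def by (simp add: add.commute)
  have qB: "B2 - 2 * t * B1 + t\<^sup>2 * B0 \<ge> 0"
    using quad_nonneg[OF r, of "-D" t] unfolding B0_def B1_def B2_def by (simp add: add.commute)
  have sum: "(A2 + B2) - 2 * t * (A1 + B1) + t\<^sup>2 * (A0 + B0) \<ge> 0" using qA qB by (simp add: algebra_simps)
  have S2: "A2 + B2 = 2 * q * (A0 + B0)" using ibA ibB root by (simp add: algebra_simps)
  have "D\<^sup>2 * ((A2 + B2) - 2 * t * (A1 + B1) + t\<^sup>2 * (A0 + B0)) \<ge> 0" using sum by simp
  moreover have "D\<^sup>2 * ((A2 + B2) - 2 * t * (A1 + B1) + t\<^sup>2 * (A0 + B0))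
      = q * (A0 + B0) * (2 * D\<^sup>2 - q) - 4 * q * D * B1"
  proof -
    have "D\<^sup>2 * ((A2 + B2) - 2 * t * (A1 + B1) + t\<^sup>2 * (A0 + B0))
        = D\<^sup>2 * (A2 + B2) - 2 * q * (D * (A1 - B1)) - 4 * q * D * B1 + q\<^sup>2 * (A0 + B0)"
      using D0 unfolding t_def by (simp add: power2_eq_square field_simps)
    also have "\<dots> = q * (A0 + B0) * (2 * D\<^sup>2 - q) - 4 * q * D * B1"
      unfolding S2 root[symmetric] by (simp add: power2_eq_square algebra_simps)
    finally show ?thesis .
  qed
  ultimately have ge: "q * (A0 + B0) * (2 * D\<^sup>2 - q) - 4 * q * D * B1 \<ge> 0" by simp
  have p2: "4 * q * D * B1 > 0" using q1 D0 B1p by simp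
  show ?thesis
  proof (rule ccontr)
    assume "\<not> ?thesis"
    hence lt: "D < sqrt ((q - 1) / 2)" using q1 unfolding D_def by (simp add: max_def)
    have "D\<^sup>2 < (sqrt ((q - 1) / 2))\<^sup>2" using lt D0 by (intro power_strict_mono) auto
    hence "D\<^sup>2 < (q - 1) / 2" using q1 by simp
    hence neg: "2 * D\<^sup>2 - q < 0" by simp
    have "q * (A0 + B0) > 0" using q1 S0p by simp
    hence "q * (A0 + B0) * (2 * D\<^sup>2 - q) < 0" using neg by (simp add: mult_pos_neg)
    thus False using ge p2 by simp
  qed
qed

end
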